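(* Let $\mathscr{I}_1\subseteq(0,1)$ and $\mathscr{I}_2\subseteq\mathbb{R}$, and let $f_\nu^\alpha:\mathbb{R}\to\mathbb{R}$ ($\nu\in\mathscr{I}_1$, $\alpha\in\mathscr{I}_2$) be even continuous functions and $\vartheta_\nu^\alpha\in[0,\infty)$ be numbers such that for some $C>0$, $\|f_\nu^\alpha\|_{L^\infty}\le C$ and $\vartheta_\nu^\alpha\le C\nu^2$ for all $\nu,\alpha$. Fix $q_*>0$. (i) Define \[ F_\nu^\alpha(X):=\int_{X+\vartheta_\nu^\alpha\tanh(q_*X)}^{X+\nu+\vartheta_\nu^\alpha\tanh(q_*X+q_*\nu)}f_\nu^\alpha(s)\,ds-\int_{X+\vartheta_\nu^\alpha\tanh(q_*X)}^{X+\nu+\vartheta_\nu^\alpha\tanh(q_*X)}f_\nu^\alpha(s)\,ds . \] Then $\sup_{\nu\in\mathscr{I}_1,\alpha\in\mathscr{I}_2,X\in\mathbb{R}}\nu^{-3}e^{2q_*|X|}|F_\nu^\alpha(X)|<\infty$. (ii) Suppose $0<q<q_*$ and $\sup_{\nu\in\mathscr{I}_1,\alpha\in\mathscr{I}_2,X\in\mathbb{R}}e^{q|X|}|f_\nu^\alpha(X)|<\infty$. Then there exist $L_\nu^{\alpha,\int}\in\mathbb{R}$ such that \[ \sup_{\nu\in\mathscr{I}_1,\alpha\in\mathscr{I}_2}\left[\left(\sup_{X\in\mathbb{R}}e^{q|X|}\left|\int_0^Xf_\nu^\alpha(s)\,ds-L_\nu^{\alpha,\int}\tanh\left(\frac{q_*X}{2}\right)\right|\right)+|L_\nu^{\alpha,\int}|\right]<\infty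 . \] *)

theory Defs
  imports "HOL-Analysis.Analysis"
begin

end

theory Submission
  imports Defs
begin

lemma G_deriv:
  fixes f :: "real \<Rightarrow> real"
  assumes "continuous_on UNIV f"
  shows "((\<lambda>u. LBINT y=ereal 0..ereal u. f y) has_real_derivative f x) (at x)"
proof -
  have "((\<lambda>u. LBINT y=ereal 0..ereal u. f y) has_vector_derivative f x) (at x within {min 0 x - 1..max 0 x + 1})"
    by (rule interval_integral_FTC2) (auto intro: continuous_on_subset[OF assms])
  then have "((\<lambda>u. LBINT y=ereal 0..ereal u. f y) has_vector_derivative f x) (at x)"
    by (subst (asm) at_within_Icc_at) auto
  then show ?thesis by (simp add: has_real_derivative_iff_has_vector_derivative)
qed

lemma G_int:
  fixes f :: "real \<Rightarrow> real"
  assumes "continuous_on UNIV f"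
  shows "(LBINT y=ereal a..ereal b. f y) = (LBINT y=ereal 0..ereal b. f y) - (LBINT y=ereal 0..ereal a. f y)"
  apply (rule interval_integral_FTC_finite)
   apply (rule continuous_on_subset[OF assms], simp)
  using G_deriv[OF assms] has_real_derivative_iff_has_vector_derivative has_vector_derivative_at_within by blast

lemma lip:
  fixes g g' :: "real \<Rightarrow> real"
  assumes "\<And>x. (g has_real_derivative g' x) (at x)" "\<And>x. \<bar>g' x\<bar> \<le> C"
  shows "\<bar>g b - g a\<bar> \<le> C * \<bar>b - a\<bar>"
proof -
  have *: "\<bar>g v - g u\<bar> \<le> C * \<bar>v - u\<bar>" if uv: "u < v" for u v
  proof -
    obtain z where "g v - g u = (v - u) * g' z" using MVT2[OF uv, of g g'] assms(1) by blast
    then show ?thesis using assms(2)[of z] uv by (simp add: abs_mult mult.commute mult_right_mono)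
  qed
  show ?thesis
    using *[of a b] *[of b a] by (cases a b rule: linorder_cases) (auto simp: abs_minus_commute)
qed

lemma sech_bound: "1 - tanh (t::real) ^ 2 \<le> 4 * exp (-2 * \<bar>t\<bar>)"
proof -
  define e where "e = exp (-2 * \<bar>t\<bar>)"
  have e: "0 < e" unfolding e_def by simp
  have "tanh t ^ 2 = tanh \<bar>t\<bar> ^ 2" by simp
  also have "tanh \<bar>t\<bar> = (1 - e) / (1 + e)" unfolding e_def tanh_real_altdef by simp
  finally have "1 - tanh t ^ 2 = 1 - ((1-e)/(1+e))^2" by simp
  also have "\<dots> = ((1+e)^2 - (1-e)^2)/(1+e)^2"
  proof -
    have p: "(1+e)^2 > 0" using e by simp
    show ?thesis unfolding power_divide using p by (simp add: diff_divide_distrib)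
  qed
  also have "\<dots> = 4*e/(1+e)^2" by (simp add: power2_eq_square algebra_simps)
  also have "\<dots> \<le> 4 * e"
  proof -
    have "1 \<le> (1+e)^2" using e by (simp add: one_le_power)
    then show ?thesis using e by (simp add: divide_le_eq mult_le_cancel_left1)
  qed
  finally show ?thesis unfolding e_def .
qed

lemma tanh_tail: assumes "(y::real) \<ge> 0" shows "1 - tanh y \<le> 2 * exp (-2 * y)"
proof -
  define e where "e = exp (-2 * y)"
  have e: "0 < e" unfolding e_def by simp
  have "1 - (1 - e)/(1+e) = 2 * e / (1 + e)" using e by (simp add: field_simps)
  then have "1 - tanh y = 2 * e / (1 + e)" unfolding e_def tanh_real_altdef by simp
  also have "\<dots> \<le> 2 * e" using e by (simp add: field_simps)
  finally show ?thesis unfolding e_def .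
qed

lemma tanh_diff:
  fixes q \<nu> X :: real
  assumes "0 < q" "0 < \<nu>" "\<nu> < 1"
  shows "\<bar>tanh (q*X + q*\<nu>) - tanh (q*X)\<bar> \<le> 4 * q * \<nu> * exp (2*q) * exp (-2*q*\<bar>X\<bar>)"
proof -
  have d: "\<And>x. (tanh has_real_derivative (1 - tanh x ^ 2)) (at x)"
    by (auto intro!: derivative_eq_intros simp: cosh_real_pos[THEN less_imp_neq, symmetric])
  obtain z where z: "q*X < z" "z < q*X + q*\<nu>" "tanh (q*X + q*\<nu>) - tanh (q*X) = (q*\<nu>) * (1 - tanh z ^ 2)"
    using MVT2[of "q*X" "q*X+q*\<nu>" tanh "\<lambda>x. 1 - tanh x ^ 2"] d assms by auto
  have nn: "0 \<le> 1 - tanh z ^ 2"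
    using tanh_real_bounds[of z] by (auto simp: abs_square_le_1 abs_le_iff)
  have "\<bar>z\<bar> \<ge> q * \<bar>X\<bar> - q"
  proof -
    have "q*\<nu> \<le> q" using assms by simp
    moreover have "q*\<bar>X\<bar> = \<bar>q*X\<bar>" using assms(1) by (simp add: abs_mult)
    ultimately show ?thesis using z(1,2) by linarith
  qed
  then have "exp (-2 * \<bar>z\<bar>) \<le> exp (2*q) * exp (-2*q*\<bar>X\<bar>)"
    by (simp add: exp_add[symmetric])
  then have "1 - tanh z ^ 2 \<le> 4 * (exp (2*q) * exp (-2*q*\<bar>X\<bar>))" using sech_bound[of z] by linarith
  then show ?thesis using z(3) nn assms
    by (simp add: abs_mult)
qed

lemma rearr: "(p::real) * E1 * (C * ((C * n\<^sup>2) * (4 * q * n * E * E2))) = 4 * C^2 * q * E * (p * n^3) * (E1 * E2)"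
  by (simp add: power2_eq_square power3_eq_cube ac_simps)

lemma part1:
  fixes f :: "real \<Rightarrow> real" and \<theta> \<nu> C qs X :: real
  assumes cont: "continuous_on UNIV f" and fb: "\<And>s. \<bar>f s\<bar> \<le> C"
    and t0: "0 \<le> \<theta>" and tb: "\<theta> \<le> C * \<nu>\<^sup>2" and nu: "0 < \<nu>" "\<nu> < 1" and qs: "qs > 0"
  shows "\<nu> powr (-3) * exp (2 * qs * \<bar>X\<bar>) *
        \<bar>(LBINT s = ereal (X + \<theta> * tanh (qs * X))
                  ..ereal (X + \<nu> + \<theta> * tanh (qs * X + qs * \<nu>)). f s)
         - (LBINT s = ereal (X + \<theta> * tanh (qs * X))
                  ..ereal (X + \<nu> + \<theta> * tanh (qs * X)). f s)\<bar> \<le> 4 * C^2 * qs * exp (2*qs)"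
proof -
  define g where "g u = (LBINT y=ereal 0..ereal u. f y)" for u
  define b1 where "b1 = X + \<nu> + \<theta> * tanh (qs * X + qs * \<nu>)"
  define b2 where "b2 = X + \<nu> + \<theta> * tanh (qs * X)"
  define a where "a = X + \<theta> * tanh (qs * X)"
  have eq: "(LBINT s = ereal a..ereal b1. f s) - (LBINT s = ereal a..ereal b2. f s) = g b1 - g b2"
    unfolding g_def using G_int[OF cont, of a b1] G_int[OF cont, of a b2] by linarith
  have C0: "0 \<le> C" using fb[of 0] by linarith
  have L1: "\<bar>g b1 - g b2\<bar> \<le> C * \<bar>b1 - b2\<bar>"
    unfolding g_def by (rule lip[OF G_deriv[OF cont] fb])
  have L2: "\<bar>b1 - b2\<bar> = \<theta> * \<bar>tanh (qs * X + qs * \<nu>) - tanh (qs * X)\<bar>"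
    unfolding b1_def b2_def using t0 by (simp add: abs_mult right_diff_distrib[symmetric])
  have L3: "\<theta> * \<bar>tanh (qs * X + qs * \<nu>) - tanh (qs * X)\<bar> \<le> (C * \<nu>\<^sup>2) * (4 * qs * \<nu> * exp (2*qs) * exp (-2*qs*\<bar>X\<bar>))"
    by (rule mult_mono[OF tb tanh_diff[OF qs nu]]) (use t0 tb in auto)
  have B: "\<bar>g b1 - g b2\<bar> \<le> C * ((C * \<nu>\<^sup>2) * (4 * qs * \<nu> * exp (2*qs) * exp (-2*qs*\<bar>X\<bar>)))"
    using L1 L2 L3 C0 by (metis mult_left_mono order_trans)
  have P: "0 \<le> \<nu> powr (-3) * exp (2 * qs * \<bar>X\<bar>)" by simp
  have "\<nu> powr (-3) * exp (2 * qs * \<bar>X\<bar>) * \<bar>g b1 - g b2\<bar> \<le>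
     \<nu> powr (-3) * exp (2 * qs * \<bar>X\<bar>) * (C * ((C * \<nu>\<^sup>2) * (4 * qs * \<nu> * exp (2*qs) * exp (-2*qs*\<bar>X\<bar>))))"
    by (rule mult_left_mono[OF B P])
  also have "\<dots> = 4 * C^2 * qs * exp (2*qs) * (\<nu> powr (-3) * \<nu>^3) * (exp (2 * qs * \<bar>X\<bar>) * exp (-2*qs*\<bar>X\<bar>))"
    by (rule rearr)
  also have "\<nu> powr (-3) * \<nu>^3 = 1" 
  proof -
    have "\<nu> powr (-3) = inverse (\<nu> powr 3)" by (rule powr_minus)
    also have "\<nu> powr 3 = \<nu> ^ 3" using nu by simp
    finally show ?thesis using nu by simp
  qed
  also have "exp (2 * qs * \<bar>X\<bar>) * exp (-2*qs*\<bar>X\<bar>) = 1" by (simp add: exp_add[symmetric])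
  finally show ?thesis using eq unfolding a_def b1_def b2_def by simp
qed
lemma part2:
  fixes f :: "real \<Rightarrow> real" and q qs K :: real
  assumes cont: "continuous_on UNIV f" and ev: "\<And>s. f (-s) = f s"
    and fK: "\<And>x. exp (q * \<bar>x\<bar>) * \<bar>f x\<bar> \<le> K" and q: "0 < q" "q < qs"
  defines "L \<equiv> Sup ((\<lambda>y. (LBINT s = ereal 0..ereal y. f s) - K / q * exp (- q * y)) ` {0..})"
  shows "exp (q * \<bar>X\<bar>) * \<bar>(LBINT s = ereal 0..ereal X. f s) - L * tanh (qs * X / 2)\<bar> + \<bar>L\<bar> \<le> 4 * K / q"
proof -
  define g where "g u = (LBINT y=ereal 0..ereal u. f y)" for u
  have gd: "\<And>x. (g has_real_derivative f x) (at x)" unfolding g_def by (rule G_deriv[OF cont])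
  have g0: "g 0 = 0" unfolding g_def by simp
  have fb: "\<bar>f x\<bar> \<le> K * exp (- q * \<bar>x\<bar>)" for x
  proof -
    have "\<bar>f x\<bar> \<le> K / exp (q * \<bar>x\<bar>)"
      using fK[of x] by (simp add: pos_le_divide_eq mult.commute)
    moreover have "K * exp (- q * \<bar>x\<bar>) = K / exp (q * \<bar>x\<bar>)"
      by (simp add: exp_minus divide_inverse)
    ultimately show ?thesis by simp
  qed
  define H1 where "H1 y = g y + K / q * exp (- q * y)" for y
  define H2 where "H2 y = g y - K / q * exp (- q * y)" for y
  have H1d: "(H1 has_real_derivative (f x - K * exp (- q * x))) (at x)" for x
    unfolding H1_def using q by (auto intro!: derivative_eq_intros gd)
  have H2d: "(H2 has_real_derivative (f x + K * exp (- q * x))) (at x)" for x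
    unfolding H2_def using q by (auto intro!: derivative_eq_intros gd)
  have H1mono: "H1 y \<le> H1 x" if "0 \<le> x" "x \<le> y" for x y
  proof (rule DERIV_nonpos_imp_nonincreasing[OF that(2)])
    fix t assume "x \<le> t" "t \<le> y"
    then have "\<bar>t\<bar> = t" using that by simp
    then show "\<exists>d. (H1 has_real_derivative d) (at t) \<and> d \<le> 0"
      using H1d[of t] fb[of t] by (intro exI[of _ "f t - K * exp (- q * t)"]) auto
  qed
  have H2mono: "H2 x \<le> H2 y" if "0 \<le> x" "x \<le> y" for x y
  proof (rule DERIV_nonneg_imp_nondecreasing[OF that(2)])
    fix t assume "x \<le> t" "t \<le> y"
    then have "\<bar>t\<bar> = t" using that by simp
    then show "\<exists>d. (H2 has_real_derivative d) (at t) \<and> d \<ge> 0"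
      using H2d[of t] fb[of t] by (intro exI[of _ "f t + K * exp (- q * t)"]) auto
  qed
  have K0: "0 \<le> K" using fK[of 0] abs_ge_zero[of "f 0"] by simp
  have H21: "H2 y \<le> H1 y" for y unfolding H1_def H2_def
    using K0 q by simp
  have Leq: "L = Sup (H2 ` {0..})" unfolding L_def H2_def g_def ..
  have bdd: "bdd_above (H2 ` {0..})"
  proof (rule bdd_aboveI2)
    fix y :: real assume "y \<in> {0..}"
    then show "H2 y \<le> H1 0" using H1mono[of 0 y] H21[of y] by simp
  qed
  have lo: "H2 x \<le> L" if "0 \<le> x" for x
    unfolding Leq by (rule cSup_upper[OF _ bdd]) (use that in simp)
  have up: "L \<le> H1 x" if "0 \<le> x" for x
    unfolding Leq
  proof (rule cSup_least)
    show "H2 ` {0..} \<noteq> {}" by simp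
    fix z assume "z \<in> H2 ` {0..}"
    then obtain y where y: "0 \<le> y" "z = H2 y" by auto
    show "z \<le> H1 x"
    proof (cases "y \<le> x")
      case True then show ?thesis using H2mono[OF y(1) True] H21[of x] y by linarith
    next
      case False then show ?thesis using H1mono[OF that, of y] H21[of y] y by linarith
    qed
  qed
  have close: "\<bar>g x - L\<bar> \<le> K / q * exp (- q * x)" if "0 \<le> x" for x
    using lo[OF that] up[OF that] unfolding H1_def H2_def by linarith
  have Lb: "\<bar>L\<bar> \<le> K / q" using close[of 0] g0 by simp
  have pos: "exp (q * Y) * \<bar>g Y - L * tanh (qs * Y / 2)\<bar> \<le> 3 * K / q" if Y: "0 \<le> Y" for Y
  proof -
    define t where "t = tanh (qs * Y / 2)"
    have t1: "0 \<le> 1 - t" using tanh_real_lt_1[of "qs * Y / 2"] unfolding t_def by simp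
    have "1 - t \<le> 2 * exp (-2 * (qs * Y / 2))" unfolding t_def by (rule tanh_tail) (use Y q in simp)
    also have "exp (-2 * (qs * Y / 2)) \<le> exp (- q * Y)" using Y q by (simp add: mult_right_mono)
    finally have t2: "1 - t \<le> 2 * exp (- q * Y)" by simp
    have "\<bar>g Y - L * t\<bar> \<le> \<bar>g Y - L\<bar> + \<bar>L\<bar> * (1 - t)"
    proof -
      have "g Y - L * t = (g Y - L) + L * (1 - t)" by (simp add: algebra_simps)
      then have "\<bar>g Y - L * t\<bar> = \<bar>(g Y - L) + L * (1 - t)\<bar>" by simp
      also have "\<dots> \<le> \<bar>g Y - L\<bar> + \<bar>L * (1 - t)\<bar>" by (rule abs_triangle_ineq)
      also have "\<bar>L * (1 - t)\<bar> = \<bar>L\<bar> * (1 - t)" using t1 by (simp add: abs_mult)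
      finally show ?thesis .
    qed
    also have "\<dots> \<le> K / q * exp (- q * Y) + K / q * (2 * exp (- q * Y))"
      by (rule add_mono[OF close[OF Y] mult_mono[OF Lb t2]]) (use K0 q t1 in auto)
    finally have "\<bar>g Y - L * t\<bar> \<le> 3 * K / q * exp (- q * Y)" by simp
    then have "exp (q * Y) * \<bar>g Y - L * t\<bar> \<le> exp (q * Y) * (3 * K / q * exp (- q * Y))"
      by (rule mult_left_mono) simp
    also have "\<dots> = 3 * K / q" by (simp add: exp_minus)
    finally show ?thesis unfolding t_def .
  qed
  have odd: "g (- x) = - g x" for x
  proof -
    have "\<forall>x. ((\<lambda>x. g (- x) + g x) has_real_derivative 0) (at x)"
    proof
      fix x
      have d1: "((\<lambda>x. g (- x)) has_real_derivative (f (- x) * (- 1))) (at x)"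
        by (rule DERIV_chain2[OF gd[of "-x"] DERIV_minus[OF DERIV_ident]])
      have "((\<lambda>x. g (- x) + g x) has_real_derivative (f (- x) * (- 1) + f x)) (at x)"
        by (rule DERIV_add[OF d1 gd])
      then show "((\<lambda>x. g (- x) + g x) has_real_derivative 0) (at x)"
        using ev[of x] by simp
    qed
    then have "(\<lambda>x. g (- x) + g x) x = (\<lambda>x. g (- x) + g x) 0"
      by (rule DERIV_isconst_all)
    then show ?thesis using g0 by simp
  qed
  have "exp (q * \<bar>X\<bar>) * \<bar>g X - L * tanh (qs * X / 2)\<bar> \<le> 3 * K / q"
  proof (cases "X \<ge> 0")
    case True then show ?thesis using pos[of X] by simp
  next
    case False
    have "\<bar>g X - L * tanh (qs * X / 2)\<bar> = \<bar>g (-X) - L * tanh (qs * (-X) / 2)\<bar>"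
    proof -
      have "tanh (qs * X / 2) = - tanh (qs * (-X) / 2)" by simp
      then have "g X - L * tanh (qs * X / 2) = - (g (-X) - L * tanh (qs * (-X) / 2))"
        using odd[of X] by simp
      then show ?thesis by (simp only: abs_minus_cancel)
    qed
    then show ?thesis using pos[of "-X"] False by simp
  qed
  then show ?thesis using Lb unfolding g_def by simp
qed
lemma conc1:
  fixes I1 I2 :: "real set"
    and f :: "real \<Rightarrow> real \<Rightarrow> real \<Rightarrow> real"
    and \<theta> :: "real \<Rightarrow> real \<Rightarrow> real"
    and C qs :: real
  assumes I1: "I1 \<subseteq> {0<..<1}"
    and C_pos: "C > 0"
    and f_even: "\<And>\<nu> \<alpha> s. \<nu> \<in> I1 \<Longrightarrow> \<alpha> \<in> I2 \<Longrightarrow> f \<nu> \<alpha> (- s) = f \<nu> \<alpha> s"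
    and f_cont: "\<And>\<nu> \<alpha>. \<nu> \<in> I1 \<Longrightarrow> \<alpha> \<in> I2 \<Longrightarrow> continuous_on UNIV (f \<nu> \<alpha>)"
    and f_bound: "\<And>\<nu> \<alpha> s. \<nu> \<in> I1 \<Longrightarrow> \<alpha> \<in> I2 \<Longrightarrow> \<bar>f \<nu> \<alpha> s\<bar> \<le> C"
    and \<theta>_nonneg: "\<And>\<nu> \<alpha>. \<nu> \<in> I1 \<Longrightarrow> \<alpha> \<in> I2 \<Longrightarrow> 0 \<le> \<theta> \<nu> \<alpha>"
    and \<theta>_bound: "\<And>\<nu> \<alpha>. \<nu> \<in> I1 \<Longrightarrow> \<alpha> \<in> I2 \<Longrightarrow> \<theta> \<nu> \<alpha> \<le> C * \<nu>\<^sup>2"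
    and qs_pos: "qs > 0"
  shows "\<exists>M. \<forall>\<nu>\<in>I1. \<forall>\<alpha>\<in>I2. \<forall>X::real.
        \<nu> powr (-3) * exp (2 * qs * \<bar>X\<bar>) *
        \<bar>(LBINT s = ereal (X + \<theta> \<nu> \<alpha> * tanh (qs * X))
                  ..ereal (X + \<nu> + \<theta> \<nu> \<alpha> * tanh (qs * X + qs * \<nu>)). f \<nu> \<alpha> s)
         - (LBINT s = ereal (X + \<theta> \<nu> \<alpha> * tanh (qs * X))
                  ..ereal (X + \<nu> + \<theta> \<nu> \<alpha> * tanh (qs * X)). f \<nu> \<alpha> s)\<bar> \<le> M"
proof (intro exI ballI allI)
  fix \<nu> \<alpha> X assume h: "\<nu> \<in> I1" "\<alpha> \<in> I2"
  have nu: "0 < \<nu>" "\<nu> < 1" using I1 h(1) by auto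
  show "\<nu> powr (-3) * exp (2 * qs * \<bar>X\<bar>) *
        \<bar>(LBINT s = ereal (X + \<theta> \<nu> \<alpha> * tanh (qs * X))
                  ..ereal (X + \<nu> + \<theta> \<nu> \<alpha> * tanh (qs * X + qs * \<nu>)). f \<nu> \<alpha> s)
         - (LBINT s = ereal (X + \<theta> \<nu> \<alpha> * tanh (qs * X))
                  ..ereal (X + \<nu> + \<theta> \<nu> \<alpha> * tanh (qs * X)). f \<nu> \<alpha> s)\<bar> \<le> 4 * C^2 * qs * exp (2*qs)"
    by (rule part1[OF f_cont[OF h] f_bound[OF h] \<theta>_nonneg[OF h] \<theta>_bound[OF h] nu qs_pos])
qed

lemma conc2_single:
  fixes I1 I2 :: "real set"
    and f :: "real \<Rightarrow> real \<Rightarrow> real \<Rightarrow> real"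
    and \<theta> :: "real \<Rightarrow> real \<Rightarrow> real"
    and C qs :: real
  assumes I1: "I1 \<subseteq> {0<..<1}"
    and C_pos: "C > 0"
    and f_even: "\<And>\<nu> \<alpha> s. \<nu> \<in> I1 \<Longrightarrow> \<alpha> \<in> I2 \<Longrightarrow> f \<nu> \<alpha> (- s) = f \<nu> \<alpha> s"
    and f_cont: "\<And>\<nu> \<alpha>. \<nu> \<in> I1 \<Longrightarrow> \<alpha> \<in> I2 \<Longrightarrow> continuous_on UNIV (f \<nu> \<alpha>)"
    and f_bound: "\<And>\<nu> \<alpha> s. \<nu> \<in> I1 \<Longrightarrow> \<alpha> \<in> I2 \<Longrightarrow> \<bar>f \<nu> \<alpha> s\<bar> \<le> C"
    and \<theta>_nonneg: "\<And>\<nu> \<alpha>. \<nu> \<in> I1 \<Longrightarrow> \<alpha> \<in> I2 \<Longrightarrow> 0 \<le> \<theta> \<nu> \<alpha>"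
    and \<theta>_bound: "\<And>\<nu> \<alpha>. \<nu> \<in> I1 \<Longrightarrow> \<alpha> \<in> I2 \<Longrightarrow> \<theta> \<nu> \<alpha> \<le> C * \<nu>\<^sup>2"
    and qs_pos: "qs > 0"
    and q: "0 < q" "q < qs" and K: "\<And>\<nu> \<alpha> X. \<nu>\<in>I1 \<Longrightarrow> \<alpha>\<in>I2 \<Longrightarrow> exp (q * \<bar>X\<bar>) * \<bar>f \<nu> \<alpha> X\<bar> \<le> K"
  shows "\<exists>L :: real \<Rightarrow> real \<Rightarrow> real. \<exists>M. \<forall>\<nu>\<in>I1. \<forall>\<alpha>\<in>I2.
               (\<forall>X::real. exp (q * \<bar>X\<bar>) *
                  \<bar>(LBINT s = ereal 0..ereal X. f \<nu> \<alpha> s) - L \<nu> \<alpha> * tanh (qs * X / 2)\<bar>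
                  + \<bar>L \<nu> \<alpha>\<bar> \<le> M)"
proof (intro exI ballI allI)
  fix \<nu> \<alpha> X assume h: "\<nu> \<in> I1" "\<alpha> \<in> I2"
  show "exp (q * \<bar>X\<bar>) *
                  \<bar>(LBINT s = ereal 0..ereal X. f \<nu> \<alpha> s) - (\<lambda>\<nu> \<alpha>. Sup ((\<lambda>y. (LBINT s = ereal 0..ereal y. f \<nu> \<alpha> s) - K / q * exp (- q * y)) ` {0..})) \<nu> \<alpha> * tanh (qs * X / 2)\<bar>
                  + \<bar>(\<lambda>\<nu> \<alpha>. Sup ((\<lambda>y. (LBINT s = ereal 0..ereal y. f \<nu> \<alpha> s) - K / q * exp (- q * y)) ` {0..})) \<nu> \<alpha>\<bar> \<le> 4 * K / q"
    using part2[OF f_cont[OF h] f_even[OF h] K[OF h] q] by simp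
qed

lemma conc2:
  fixes I1 I2 :: "real set"
    and f :: "real \<Rightarrow> real \<Rightarrow> real \<Rightarrow> real"
    and \<theta> :: "real \<Rightarrow> real \<Rightarrow> real"
    and C qs :: real
  assumes I1: "I1 \<subseteq> {0<..<1}"
    and C_pos: "C > 0"
    and f_even: "\<And>\<nu> \<alpha> s. \<nu> \<in> I1 \<Longrightarrow> \<alpha> \<in> I2 \<Longrightarrow> f \<nu> \<alpha> (- s) = f \<nu> \<alpha> s"
    and f_cont: "\<And>\<nu> \<alpha>. \<nu> \<in> I1 \<Longrightarrow> \<alpha> \<in> I2 \<Longrightarrow> continuous_on UNIV (f \<nu> \<alpha>)"
    and f_bound: "\<And>\<nu> \<alpha> s. \<nu> \<in> I1 \<Longrightarrow> \<alpha> \<in> I2 \<Longrightarrow> \<bar>f \<nu> \<alpha> s\<bar> \<le> C"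
    and \<theta>_nonneg: "\<And>\<nu> \<alpha>. \<nu> \<in> I1 \<Longrightarrow> \<alpha> \<in> I2 \<Longrightarrow> 0 \<le> \<theta> \<nu> \<alpha>"
    and \<theta>_bound: "\<And>\<nu> \<alpha>. \<nu> \<in> I1 \<Longrightarrow> \<alpha> \<in> I2 \<Longrightarrow> \<theta> \<nu> \<alpha> \<le> C * \<nu>\<^sup>2"
    and qs_pos: "qs > 0"
  shows "(\<forall>q::real. 0 < q \<and> q < qs \<and>
          (\<exists>K. \<forall>\<nu>\<in>I1. \<forall>\<alpha>\<in>I2. \<forall>X::real. exp (q * \<bar>X\<bar>) * \<bar>f \<nu> \<alpha> X\<bar> \<le> K)
        \<longrightarrow> (\<exists>L :: real \<Rightarrow> real \<Rightarrow> real. \<exists>M. \<forall>\<nu>\<in>I1. \<forall>\<alpha>\<in>I2.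
               (\<forall>X::real. exp (q * \<bar>X\<bar>) *
                  \<bar>(LBINT s = ereal 0..ereal X. f \<nu> \<alpha> s) - L \<nu> \<alpha> * tanh (qs * X / 2)\<bar>
                  + \<bar>L \<nu> \<alpha>\<bar> \<le> M)))"
proof (intro allI impI)
  fix q assume a: "0 < q \<and> q < qs \<and> (\<exists>K. \<forall>\<nu>\<in>I1. \<forall>\<alpha>\<in>I2. \<forall>X::real. exp (q * \<bar>X\<bar>) * \<bar>f \<nu> \<alpha> X\<bar> \<le> K)"
  then obtain K where K: "\<And>\<nu> \<alpha> X. \<nu>\<in>I1 \<Longrightarrow> \<alpha>\<in>I2 \<Longrightarrow> exp (q * \<bar>X\<bar>) * \<bar>f \<nu> \<alpha> X\<bar> \<le> K" by blast
  have q: "0 < q" "q < qs" using a by auto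
  show "\<exists>L :: real \<Rightarrow> real \<Rightarrow> real. \<exists>M. \<forall>\<nu>\<in>I1. \<forall>\<alpha>\<in>I2.
               (\<forall>X::real. exp (q * \<bar>X\<bar>) *
                  \<bar>(LBINT s = ereal 0..ereal X. f \<nu> \<alpha> s) - L \<nu> \<alpha> * tanh (qs * X / 2)\<bar>
                  + \<bar>L \<nu> \<alpha>\<bar> \<le> M)"
    by (rule conc2_single[OF I1 C_pos f_even f_cont f_bound \<theta>_nonneg \<theta>_bound qs_pos q K])
qed

theorem lemmaB3:
  fixes I1 I2 :: "real set"
    and f :: "real \<Rightarrow> real \<Rightarrow> real \<Rightarrow> real"
    and \<theta> :: "real \<Rightarrow> real \<Rightarrow> real"
    and C qs :: real
  assumes I1: "I1 \<subseteq> {0<..<1}"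
    and C_pos: "C > 0"
    and f_even: "\<And>\<nu> \<alpha> s. \<nu> \<in> I1 \<Longrightarrow> \<alpha> \<in> I2 \<Longrightarrow> f \<nu> \<alpha> (- s) = f \<nu> \<alpha> s"
    and f_cont: "\<And>\<nu> \<alpha>. \<nu> \<in> I1 \<Longrightarrow> \<alpha> \<in> I2 \<Longrightarrow> continuous_on UNIV (f \<nu> \<alpha>)"
    and f_bound: "\<And>\<nu> \<alpha> s. \<nu> \<in> I1 \<Longrightarrow> \<alpha> \<in> I2 \<Longrightarrow> \<bar>f \<nu> \<alpha> s\<bar> \<le> C"
    and \<theta>_nonneg: "\<And>\<nu> \<alpha>. \<nu> \<in> I1 \<Longrightarrow> \<alpha> \<in> I2 \<Longrightarrow> 0 \<le> \<theta> \<nu> \<alpha>"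
    and \<theta>_bound: "\<And>\<nu> \<alpha>. \<nu> \<in> I1 \<Longrightarrow> \<alpha> \<in> I2 \<Longrightarrow> \<theta> \<nu> \<alpha> \<le> C * \<nu>\<^sup>2"
    and qs_pos: "qs > 0"
  shows
    "(\<exists>M. \<forall>\<nu>\<in>I1. \<forall>\<alpha>\<in>I2. \<forall>X::real.
        \<nu> powr (-3) * exp (2 * qs * \<bar>X\<bar>) *
        \<bar>(LBINT s = ereal (X + \<theta> \<nu> \<alpha> * tanh (qs * X))
                  ..ereal (X + \<nu> + \<theta> \<nu> \<alpha> * tanh (qs * X + qs * \<nu>)). f \<nu> \<alpha> s)
         - (LBINT s = ereal (X + \<theta> \<nu> \<alpha> * tanh (qs * X))
                  ..ereal (X + \<nu> + \<theta> \<nu> \<alpha> * tanh (qs * X)). f \<nu> \<alpha> s)\<bar> \<le> M)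
     \<and> (\<forall>q::real. 0 < q \<and> q < qs \<and>
          (\<exists>K. \<forall>\<nu>\<in>I1. \<forall>\<alpha>\<in>I2. \<forall>X::real. exp (q * \<bar>X\<bar>) * \<bar>f \<nu> \<alpha> X\<bar> \<le> K)
        \<longrightarrow> (\<exists>L :: real \<Rightarrow> real \<Rightarrow> real. \<exists>M. \<forall>\<nu>\<in>I1. \<forall>\<alpha>\<in>I2.
               (\<forall>X::real. exp (q * \<bar>X\<bar>) *
                  \<bar>(LBINT s = ereal 0..ereal X. f \<nu> \<alpha> s) - L \<nu> \<alpha> * tanh (qs * X / 2)\<bar>
                  + \<bar>L \<nu> \<alpha>\<bar> \<le> M)))"
  using conc1[OF I1 C_pos f_even f_cont f_bound \<theta>_nonneg \<theta>_bound qs_pos]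
    conc2[OF I1 C_pos f_even f_cont f_bound \<theta>_nonneg \<theta>_bound qs_pos]
  by (rule conjI)

end
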